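(* Let $B$ be the residue code of an extremal Type~II $\mathbb{Z}_4$-code of length $n$. If $n=32$ then $6\le \dim(B)\le 16$, and if $n=40$ then $7\le\dim(B)\le 20$.
   Context: A $\mathbb{Z}_4$-code of length $n$ is a $\mathbb{Z}_4$-submodule of $\mathbb{Z}_4^n$; it is self-dual if it equals its dual with respect to $x\cdot y=\sum x_iy_i \pmod 4$. The Euclidean weight of $x$ is $n_1(x)+4n_2(x)+n_3(x)$, $n_\alpha(x)$ being the number of coordinates equal to $\alpha$. A Type~II $\mathbb{Z}_4$-code is a self-dual code all of whose codewords have Euclidean weight divisible by $8$; it is extremal if its minimum Euclidean weight equals $8\lfloor n/24\rfloor+8$. The residue code is $C^{(1)}=\{c\bmod 2: c\in C\}$, a binary linear code; $\dim$ denotes its dimension over $\mathbb{F}_2$. *)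

theory Defs
  imports Complex_Main "HOL-Library.Numeral_Type" "HOL-Library.Z2" "HOL-Library.Function_Algebras"
begin

definition z4_vecs :: "nat \<Rightarrow> (nat \<Rightarrow> 4) set" where
  "z4_vecs n = {x. \<forall>i\<ge>n. x i = 0}"

definition z4_code :: "nat \<Rightarrow> (nat \<Rightarrow> 4) set \<Rightarrow> bool" where
  "z4_code n C \<longleftrightarrow> C \<subseteq> z4_vecs n \<and> 0 \<in> C \<and>
     (\<forall>x\<in>C. \<forall>y\<in>C. x + y \<in> C) \<and> (\<forall>a::4. \<forall>x\<in>C. (\<lambda>i. a * x i) \<in> C)"

definition z4_inner :: "nat \<Rightarrow> (nat \<Rightarrow> 4) \<Rightarrow> (nat \<Rightarrow> 4) \<Rightarrow> 4" where
  "z4_inner n x y = (\<Sum>i<n. x i * y i)"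

definition z4_dual :: "nat \<Rightarrow> (nat \<Rightarrow> 4) set \<Rightarrow> (nat \<Rightarrow> 4) set" where
  "z4_dual n C = {y \<in> z4_vecs n. \<forall>x\<in>C. z4_inner n x y = 0}"

definition z4_self_dual :: "nat \<Rightarrow> (nat \<Rightarrow> 4) set \<Rightarrow> bool" where
  "z4_self_dual n C \<longleftrightarrow> z4_code n C \<and> C = z4_dual n C"

definition euclid_wt :: "nat \<Rightarrow> (nat \<Rightarrow> 4) \<Rightarrow> nat" where
  "euclid_wt n x = card {i. i < n \<and> x i = 1} + 4 * card {i. i < n \<and> x i = 2}
                   + card {i. i < n \<and> x i = 3}"

definition type_II :: "nat \<Rightarrow> (nat \<Rightarrow> 4) set \<Rightarrow> bool" where
  "type_II n C \<longleftrightarrow> z4_self_dual n C \<and> (\<forall>c\<in>C. 8 dvd euclid_wt n c)"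

definition min_euclid_wt :: "nat \<Rightarrow> (nat \<Rightarrow> 4) set \<Rightarrow> nat" where
  "min_euclid_wt n C = Min {euclid_wt n c | c. c \<in> C \<and> c \<noteq> 0}"

definition extremal_type_II :: "nat \<Rightarrow> (nat \<Rightarrow> 4) set \<Rightarrow> bool" where
  "extremal_type_II n C \<longleftrightarrow> type_II n C \<and> min_euclid_wt n C = 8 * (n div 24) + 8"

text \<open>Reduction mod 2 of an element of Z4 (Rep_bit0 gives its representative in {0..3}).\<close>
definition red2 :: "4 \<Rightarrow> bit" where
  "red2 a = of_int (Rep_bit0 a)"

definition residue_code :: "(nat \<Rightarrow> 4) set \<Rightarrow> (nat \<Rightarrow> bit) set" where
  "residue_code C = (\<lambda>c i. red2 (c i)) ` C"

definition bin_dim :: "(nat \<Rightarrow> bit) set \<Rightarrow> nat" where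
  "bin_dim B = vector_space.dim (\<lambda>(a::bit) (v::nat \<Rightarrow> bit) i. a * v i) B"

end

theory Submission
  imports Defs
begin


declare add_bit_eq_xor[simp del] mult_bit_eq_and[simp del]

definition W :: "nat \<Rightarrow> (nat \<Rightarrow> bit) set" where "W n = {x. \<forall>i\<ge>n. x i = 0}"
definition bi :: "nat \<Rightarrow> (nat \<Rightarrow> bit) \<Rightarrow> (nat \<Rightarrow> bit) \<Rightarrow> bit" where
  "bi n x y = (\<Sum>i<n. x i * y i)"
definition perp :: "nat \<Rightarrow> (nat \<Rightarrow> bit) set \<Rightarrow> (nat \<Rightarrow> bit) set" where
  "perp n B = {y \<in> W n. \<forall>x\<in>B. bi n x y = 0}"
definition ee :: "nat \<Rightarrow> nat \<Rightarrow> bit" where "ee i = (\<lambda>j. if j = i then 1 else 0)"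
definition chi :: "bit \<Rightarrow> int" where "chi b = (if b = 0 then 1 else -1)"

lemma bit_add_self[simp]: "(a::bit) + a = 0"
  by (cases a) auto

lemma fun_add_self[simp]: "(x::nat\<Rightarrow>bit) + x = 0"
  by (simp add: fun_eq_iff)

lemma chi_add1: "chi (b + 1) = - chi b"
  by (cases b) (auto simp: chi_def)

lemma card_W: "finite (W n) \<and> card (W n) = 2 ^ n"
proof (induction n)
  case 0
  have "W 0 = {0}" by (auto simp: W_def fun_eq_iff)
  then show ?case by simp
next
  case (Suc n)
  have eq: "W (Suc n) = W n \<union> (\<lambda>x. x + ee n) ` W n"
  proof (rule set_eqI, rule iffI)
    fix x assume x: "x \<in> W (Suc n)"
    show "x \<in> W n \<union> (\<lambda>x. x + ee n) ` W n"
    proof (cases "x n = 0")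
      case True
      have "x i = 0" if "n \<le> i" for i
        using that x True by (cases "i = n") (auto simp: W_def)
      then have "x \<in> W n" by (auto simp: W_def)
      then show ?thesis by blast
    next
      case False
      then have "x + ee n \<in> W n" using x by (auto simp: W_def ee_def le_Suc_eq)
      moreover have "x = (x + ee n) + ee n" by (simp add: add.assoc)
      ultimately show ?thesis by blast
    qed
  next
    fix x assume "x \<in> W n \<union> (\<lambda>x. x + ee n) ` W n"
    then show "x \<in> W (Suc n)" by (auto simp: W_def ee_def)
  qed
  have disj: "W n \<inter> (\<lambda>x. x + ee n) ` W n = {}"
    by (auto simp: W_def ee_def)
  have inj: "inj_on (\<lambda>x. x + ee n) (W n)" by (rule inj_onI) simp
  have "finite (W (Suc n))" using Suc eq by simp
  moreover have "card (W (Suc n)) = 2 ^ Suc n"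
    using Suc eq disj inj by (simp add: card_Un_disjoint card_image)
  ultimately show ?case by simp
qed

lemma sum_neg_zero:
  fixes \<phi> :: "'a \<Rightarrow> int"
  assumes "bij_betw f A A" "\<And>a. a \<in> A \<Longrightarrow> \<phi> (f a) = - \<phi> a"
  shows "sum \<phi> A = 0"
proof -
  have "sum \<phi> A = sum (\<phi> \<circ> f) A" using sum.reindex_bij_betw[OF assms(1), of \<phi>] by simp
  also have "\<dots> = - sum \<phi> A" by (simp add: assms(2) sum_negf)
  finally show ?thesis by simp
qed

lemma bi_add1: "bi n (x + y) z = bi n x z + bi n y z"
  by (simp add: bi_def sum.distrib distrib_right)
lemma bi_add2: "bi n z (x + y) = bi n z x + bi n z y"
  by (simp add: bi_def sum.distrib distrib_left)
lemma bi_ee: assumes "i < n" shows "bi n b (ee i) = b i"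
proof -
  have "bi n b (ee i) = (\<Sum>j<n. if j = i then b j else 0)"
    unfolding bi_def ee_def by (rule sum.cong) auto
  then show ?thesis using assms by simp
qed
lemma bi_0[simp]: "bi n 0 x = 0" by (simp add: bi_def)

lemma involution_bij: "(\<And>a. a \<in> A \<Longrightarrow> f a \<in> A) \<Longrightarrow> (\<And>a. a \<in> A \<Longrightarrow> f (f a) = a) \<Longrightarrow> bij_betw f A A"
  by (rule bij_betw_byWitness[where f'=f]) auto

lemma perp_card:
  assumes BW: "B \<subseteq> W n" and B0: "0 \<in> B" and Badd: "\<And>x y. x \<in> B \<Longrightarrow> y \<in> B \<Longrightarrow> x + y \<in> B"
  shows "card B * card (perp n B) = 2 ^ n"
proof -
  obtain fW: "finite (W n)" and cW: "card (W n) = 2 ^ n" using card_W by blast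
  have fB: "finite B" using BW fW finite_subset by blast
  have pW: "perp n B \<subseteq> W n" by (auto simp: perp_def)
  define S where "S = (\<Sum>x\<in>W n. \<Sum>b\<in>B. chi (bi n b x))"
  have inner1: "(\<Sum>b\<in>B. chi (bi n b x)) = (if x \<in> perp n B then int (card B) else 0)"
    if x: "x \<in> W n" for x
  proof (cases "x \<in> perp n B")
    case True
    then have "\<And>b. b \<in> B \<Longrightarrow> chi (bi n b x) = 1" by (auto simp: perp_def chi_def)
    then show ?thesis using True by simp
  next
    case False
    then obtain b0 where b0: "b0 \<in> B" "bi n b0 x = 1" using x by (auto simp: perp_def)
    have "(\<Sum>b\<in>B. chi (bi n b x)) = 0"
    proof (rule sum_neg_zero[where f="\<lambda>b. b + b0"])
      show "bij_betw (\<lambda>b. b + b0) B B"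
        by (rule involution_bij) (auto simp: Badd b0 add.assoc)
      fix b assume "b \<in> B"
      show "chi (bi n (b + b0) x) = - chi (bi n b x)"
        by (simp add: bi_add1 b0 chi_add1 del: bit_not_zero_iff)
    qed
    then show ?thesis using False by simp
  qed
  have "S = (\<Sum>x\<in>W n. if x \<in> perp n B then int (card B) else 0)"
    unfolding S_def using inner1 by (rule sum.cong[OF refl])
  also have "\<dots> = int (card B) * int (card (perp n B))"
    using fW pW by (simp add: sum.If_cases Int_absorb1)
  finally have S1: "S = int (card B) * int (card (perp n B))" .
  have inner2: "(\<Sum>x\<in>W n. chi (bi n b x)) = (if b = 0 then 2 ^ n else 0)"
    if b: "b \<in> B" for b
  proof (cases "b = 0")
    case True
    then show ?thesis using cW by (simp add: chi_def)
  next
    case False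
    then obtain i where i: "b i \<noteq> 0" by (auto simp: fun_eq_iff)
    have "\<forall>j\<ge>n. b j = 0" using b BW by (auto simp: W_def)
    then have "i < n" using i by (meson not_le)
    have "(\<Sum>x\<in>W n. chi (bi n b x)) = 0"
    proof (rule sum_neg_zero[where f="\<lambda>x. x + ee i"])
      show "bij_betw (\<lambda>x. x + ee i) (W n) (W n)"
        using \<open>i < n\<close> by (intro involution_bij) (auto simp: W_def ee_def add.assoc)
      fix x assume "x \<in> W n"
      show "chi (bi n b (x + ee i)) = - chi (bi n b x)"
        using i by (simp add: bi_add2 bi_ee \<open>i < n\<close> chi_add1)
    qed
    then show ?thesis using False by simp
  qed
  have "S = (\<Sum>b\<in>B. \<Sum>x\<in>W n. chi (bi n b x))" unfolding S_def by (rule sum.swap)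
  also have "\<dots> = (\<Sum>b\<in>B. if b = 0 then 2 ^ n else 0)"
    using inner2 by (rule sum.cong[OF refl])
  also have "\<dots> = 2 ^ n" using fB B0 by simp
  finally have "int (card B) * int (card (perp n B)) = 2 ^ n" using S1 by simp
  then have "int (card B * card (perp n B)) = int (2 ^ n)" by simp
  then show ?thesis by (simp only: of_nat_eq_iff)
qed



interpretation bv: vector_space "\<lambda>(a::bit) (v::nat\<Rightarrow>bit) i. a * v i"
  by unfold_locales (auto simp: fun_eq_iff algebra_simps)

lemma fun_bit_diff: "(x::nat\<Rightarrow>bit) - y = x + y"
  by (simp add: fun_eq_iff)

lemma bit_cases2: "(k::bit) = 0 \<or> k = 1" by (cases k) auto

lemma span_card:
  assumes "finite S" "bv.independent S" "finite (bv.span S)"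
  shows "card (bv.span S) = 2 ^ card S"
  using assms
proof (induction S rule: finite_induct)
  case empty
  then show ?case by (simp add: bv.span_empty)
next
  case (insert a S)
  have indS: "bv.independent S" and aS: "a \<notin> bv.span S"
    using insert.prems(1) insert.hyps(2) by (auto simp: bv.independent_insert)
  have sub: "bv.span S \<subseteq> bv.span (insert a S)" by (rule bv.span_mono) blast
  have fin: "finite (bv.span S)" using insert.prems(2) sub finite_subset by blast
  have IH: "card (bv.span S) = 2 ^ card S" using insert.IH indS fin by blast
  have eq: "bv.span (insert a S) = bv.span S \<union> (\<lambda>y. a + y) ` bv.span S"
  proof -
    have "bv.span (insert a S) = {x. \<exists>k. x - (\<lambda>i. k * a i) \<in> bv.span S}"
      by (rule bv.span_insert)
    also have "\<dots> = bv.span S \<union> (\<lambda>y. a + y) ` bv.span S"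
    proof (rule set_eqI, rule iffI)
      fix x assume "x \<in> {x. \<exists>k. x - (\<lambda>i. k * a i) \<in> bv.span S}"
      then obtain k where k: "x - (\<lambda>i. k * a i) \<in> bv.span S" by blast
      show "x \<in> bv.span S \<union> (\<lambda>y. a + y) ` bv.span S"
      proof (cases "k = 0")
        case True
        then have h: "x - (\<lambda>i. k * a i) = x" by (simp add: fun_eq_iff)
        show ?thesis using k[unfolded h] by blast
      next
        case False
        then have "k = 1" using bit_cases2 by blast
        then have h2: "x - (\<lambda>i. k * a i) = x + a" by (simp add: fun_eq_iff)
        have xeq: "x = a + (x + a)"
        proof -
          have "a + (x + a) = x + (a + a)" by (simp only: ac_simps)
          then show ?thesis by (simp only: fun_add_self add_0_right)
        qed
        have xa: "x + a \<in> bv.span S" using k[unfolded h2] .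
        show ?thesis by (rule UnI2, rule image_eqI[where x="x+a"], rule xeq, rule xa)
      qed
    next
      fix x assume "x \<in> bv.span S \<union> (\<lambda>y. a + y) ` bv.span S"
      then show "x \<in> {x. \<exists>k. x - (\<lambda>i. k * a i) \<in> bv.span S}"
      proof
        assume "x \<in> bv.span S"
        moreover have "x - (\<lambda>i. 0 * a i) = x" by (simp add: fun_eq_iff)
        ultimately have "x - (\<lambda>i. 0 * a i) \<in> bv.span S" by simp
        then show ?thesis by blast
      next
        assume "x \<in> (\<lambda>y. a + y) ` bv.span S"
        then obtain y where y: "y \<in> bv.span S" "x = a + y" by blast
        have "x - (\<lambda>i. 1 * a i) = y" using y(2) by (simp add: fun_eq_iff add.commute add.left_commute)
        then have "x - (\<lambda>i. 1 * a i) \<in> bv.span S" using y(1) by simp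
        then show ?thesis by blast
      qed
    qed
    finally show ?thesis .
  qed
  have disj: "bv.span S \<inter> (\<lambda>y. a + y) ` bv.span S = {}"
  proof (rule ccontr)
    assume "bv.span S \<inter> (\<lambda>y. a + y) ` bv.span S \<noteq> {}"
    then obtain y where y: "y \<in> bv.span S" "a + y \<in> bv.span S" by blast
    then have "(a + y) + y \<in> bv.span S" by (rule bv.span_add[rotated])
    moreover have "(a + y) + y = a" by (simp add: add.assoc)
    ultimately show False using aS by simp
  qed
  have inj: "inj_on (\<lambda>y. a + y) (bv.span S)" by (rule inj_onI) simp
  have "card (bv.span (insert a S)) = card (bv.span S) + card (bv.span S)"
    using eq disj fin inj by (simp add: card_Un_disjoint card_image)
  then show ?case using IH insert.hyps by simp
qed

lemma card_dim:
  assumes fB: "finite B" and B0: "0 \<in> B" and Badd: "\<And>x y. x \<in> B \<Longrightarrow> y \<in> B \<Longrightarrow> x + y \<in> B"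
  shows "card B = 2 ^ bin_dim B"
proof -
  have sB: "bv.subspace B"
    unfolding bv.subspace_def
  proof (intro conjI ballI allI)
    show "0 \<in> B" by (rule B0)
    fix x y assume "x \<in> B" "y \<in> B" then show "x + y \<in> B" by (rule Badd)
  next
    fix c :: bit and x assume x: "x \<in> B"
    show "(\<lambda>i. c * x i) \<in> B"
    proof (cases "c = 0")
      case True
      then have h: "(\<lambda>i. c * x i) = 0" by (simp add: fun_eq_iff)
      show ?thesis unfolding h by (rule B0)
    next
      case False
      then have "c = 1" using bit_cases2 by blast
      then show ?thesis using x by simp
    qed
  qed
  obtain Bs where Bs: "Bs \<subseteq> B" "bv.independent Bs" "B \<subseteq> bv.span Bs" "card Bs = bv.dim B"
    by (rule bv.basis_exists)
  have "bv.span Bs \<subseteq> B" using Bs(1) sB by (rule bv.span_minimal)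
  then have sp: "bv.span Bs = B" using Bs(3) by blast
  have "finite Bs" using Bs(1) fB finite_subset by blast
  then have "card (bv.span Bs) = 2 ^ card Bs" using span_card[OF \<open>finite Bs\<close> Bs(2)] sp fB by simp
  then show ?thesis using sp Bs(4) by (simp add: bin_dim_def)
qed



lemma ex4: "(x::4) = 0 \<or> x = 1 \<or> x = 2 \<or> x = 3"
proof (cases x)
  case (of_int z)
  then have "z = 0 \<or> z = 1 \<or> z = 2 \<or> z = 3" by auto
  then show ?thesis using of_int by auto
qed

lemma R0[simp]: "red2 0 = 0" by (simp add: red2_def bit0.Rep_0)
lemma R1[simp]: "red2 1 = 1" by (simp add: red2_def bit0.Rep_1)
lemma R2[simp]: "red2 2 = 0" by (simp add: red2_def bit0.Rep_numeral)
lemma R3[simp]: "red2 3 = 1" by (simp add: red2_def bit0.Rep_numeral)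

lemma red2_add: "red2 (a + b) = red2 a + red2 b"
  using ex4[of a] ex4[of b] by (auto simp: red2_def bit0.Rep_numeral bit0.Rep_0 bit0.Rep_1)
lemma red2_mult: "red2 (a * b) = red2 a * red2 b"
  using ex4[of a] ex4[of b] by (auto simp: red2_def bit0.Rep_numeral bit0.Rep_0 bit0.Rep_1)

lemma red2_sum: "red2 (\<Sum>i\<in>A. f i) = (\<Sum>i\<in>A. red2 (f i))"
proof (cases "finite A")
  case True
  then show ?thesis by (induction A rule: finite_induct) (auto simp: red2_add)
qed simp

definition hh :: "bit \<Rightarrow> 4" where "hh b = (if b = 1 then 2 else 0)"

lemma hh_add: "hh (a + b) = hh a + hh b"
  by (cases a; cases b) (auto simp: hh_def)

lemma hh0[simp]: "hh 0 = 0" by (simp add: hh_def)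

lemma hh_sum: "hh (\<Sum>i\<in>A. f i) = (\<Sum>i\<in>A. hh (f i))"
proof (cases "finite A")
  case True
  then show ?thesis by (induction A rule: finite_induct) (simp_all add: hh_add)
qed simp

lemma mult_L: "(c::4) * (if v = 1 then 2 else 0) = hh (red2 c * v)"
  using ex4[of c] by (cases v) (auto simp: hh_def)

definition wt :: "nat \<Rightarrow> (nat \<Rightarrow> bit) \<Rightarrow> nat" where
  "wt n v = card {i. i < n \<and> v i = 1}"

lemma sum_wt: "(\<Sum>i<n. v i) = (of_nat (wt n v) :: bit)"
proof -
  have "(\<Sum>i<n. v i) = (\<Sum>i<n. (of_bool (v i = 1) :: bit))"
  proof (rule sum.cong)
    fix x show "v x = of_bool (v x = 1)" by (cases "v x") auto
  qed simp
  also have "\<dots> = of_nat (card ({..<n} \<inter> {i. v i = 1}))" by simp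
  also have "{..<n} \<inter> {i. v i = 1} = {i. i < n \<and> v i = 1}" by auto
  finally show ?thesis by (simp add: wt_def)
qed

lemma card_le_n: "card {i. i < n \<and> P i} \<le> n"
proof -
  have "card {i. i < n \<and> P i} \<le> card {..<n}" by (rule card_mono) auto
  then show ?thesis by simp
qed

lemma euclid_wt_le: "euclid_wt n c \<le> 6 * n"
  unfolding euclid_wt_def using card_le_n[of n "\<lambda>i. c i = 1"] card_le_n[of n "\<lambda>i. c i = 2"]
    card_le_n[of n "\<lambda>i. c i = 3"] by linarith



lemma L_test: "(2::4) \<noteq> 1 \<and> (2::4) \<noteq> 0 \<and> (2::4) \<noteq> 3 \<and> (0::4) \<noteq> 1 \<and> (0::4) \<noteq> 2 \<and> (0::4) \<noteq> 3"
  by simp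

lemma main_aux:
  assumes ext: "extremal_type_II n C" and n: "n = 32 \<or> n = 40"
  shows "2 * bin_dim (residue_code C) \<le> n \<and> 2 * n \<le> 2 ^ bin_dim (residue_code C)"
proof -
  have cC: "z4_code n C" and dual: "C = z4_dual n C" and t8: "\<forall>c\<in>C. 8 dvd euclid_wt n c"
    and mn: "min_euclid_wt n C = 8 * (n div 24) + 8"
    using ext by (auto simp: extremal_type_II_def type_II_def z4_self_dual_def)
  have mn16: "min_euclid_wt n C = 16" using mn n by auto
  have npos: "0 < n" using n by auto
  define red :: "(nat \<Rightarrow> 4) \<Rightarrow> nat \<Rightarrow> bit" where "red c = (\<lambda>i. red2 (c i))" for c
  define B where "B = residue_code C"
  have Bred: "B = red ` C" by (simp add: B_def residue_code_def red_def)
  have CV: "C \<subseteq> z4_vecs n" using cC by (simp add: z4_code_def)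
  have C0: "0 \<in> C" using cC by (simp add: z4_code_def)
  have Cadd: "\<And>x y. x \<in> C \<Longrightarrow> y \<in> C \<Longrightarrow> x + y \<in> C" using cC by (simp add: z4_code_def)
  have BW: "B \<subseteq> W n"
  proof
    fix x assume "x \<in> B"
    then obtain c where c: "c \<in> C" "x = red c" using Bred by blast
    then have "\<forall>i\<ge>n. c i = 0" using CV by (auto simp: z4_vecs_def)
    then show "x \<in> W n" using c by (simp add: W_def red_def)
  qed
  have B0: "0 \<in> B"
  proof -
    have "red 0 = 0" by (simp add: red_def fun_eq_iff)
    then show ?thesis using C0 Bred by (metis image_eqI)
  qed
  have Badd: "x + y \<in> B" if xyB: "x \<in> B" "y \<in> B" for x y
  proof -
    obtain c c' where c: "c \<in> C" "x = red c" "c' \<in> C" "y = red c'" using xyB Bred by blast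
    have "red (c + c') = x + y" using c by (simp add: red_def fun_eq_iff red2_add)
    moreover have "c + c' \<in> C" using c Cadd by blast
    ultimately show ?thesis using Bred by (metis image_eqI)
  qed
  have finW: "finite (W n)" and cW: "card (W n) = 2 ^ n" using card_W by auto
  have fB: "finite B" using BW finW finite_subset by blast
  define k where "k = bin_dim B"
  have cB: "card B = 2 ^ k" unfolding k_def by (rule card_dim[OF fB B0 Badd])
  have bi_red: "bi n (red c) y = red2 (z4_inner n c y')"
    if "\<And>i. i < n \<Longrightarrow> y i = red2 (y' i)" for c y y'
    using that by (simp add: bi_def z4_inner_def red_def red2_sum red2_mult)
  define T where "T = perp n B"
  have TW: "T \<subseteq> W n" by (auto simp: T_def perp_def)
  have fT: "finite T" using TW finW finite_subset by blast
  have BT: "B \<subseteq> T"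
  proof
    fix x assume x: "x \<in> B"
    then obtain c' where c': "c' \<in> C" "x = red c'" using Bred by blast
    have "bi n y x = 0" if "y \<in> B" for y
    proof -
      obtain c where c: "c \<in> C" "y = red c" using \<open>y \<in> B\<close> Bred by blast
      have "c' \<in> z4_dual n C" using c' dual by blast
      then have "z4_inner n c c' = 0" using c by (simp add: z4_dual_def)
      then show ?thesis using bi_red[of x c'] c c' by (simp add: red_def)
    qed
    then show "x \<in> T" using x BW by (auto simp: T_def perp_def)
  qed
  have cBT: "card B * card T = 2 ^ n" unfolding T_def by (rule perp_card[OF BW B0 Badd])
  define L :: "(nat \<Rightarrow> bit) \<Rightarrow> nat \<Rightarrow> 4" where "L v = (\<lambda>i. if v i = 1 then 2 else 0)" for v
  have LC: "L v \<in> C" if v: "v \<in> T" for v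
  proof -
    have vW: "v \<in> W n" using v TW by blast
    have "L v \<in> z4_vecs n" using vW by (auto simp: z4_vecs_def W_def L_def)
    moreover have "z4_inner n c (L v) = 0" if c: "c \<in> C" for c
    proof -
      have "z4_inner n c (L v) = (\<Sum>i<n. hh (red2 (c i) * v i))"
        unfolding z4_inner_def L_def by (simp add: mult_L)
      also have "\<dots> = hh (bi n (red c) v)" by (simp add: hh_sum bi_def red_def)
      also have "bi n (red c) v = 0" using v c Bred by (auto simp: T_def perp_def)
      finally show ?thesis by simp
    qed
    ultimately have "L v \<in> z4_dual n C" by (simp add: z4_dual_def)
    then show ?thesis using dual by blast
  qed
  have wtL: "euclid_wt n (L v) = 4 * wt n v" for v
  proof -
    have "{i. i < n \<and> L v i = 1} = {}" by (auto simp: L_def)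
    moreover have "{i. i < n \<and> L v i = 3} = {}" by (auto simp: L_def)
    moreover have "{i. i < n \<and> L v i = 2} = {i. i < n \<and> v i = 1}" by (auto simp: L_def)
    ultimately show ?thesis by (simp add: euclid_wt_def wt_def)
  qed
  have Teven: "even (wt n v)" if "v \<in> T" for v
  proof -
    have "8 dvd 4 * wt n v" using t8 LC[OF that] wtL[of v] by metis
    then obtain m where "4 * wt n v = 8 * m" by (auto elim: dvdE)
    then have "wt n v = 2 * m" by simp
    then show ?thesis by simp
  qed
  have Tmin: "4 \<le> wt n v" if v: "v \<in> T" "v \<noteq> 0" for v
  proof -
    obtain i where i: "v i \<noteq> 0" using v(2) by (auto simp: fun_eq_iff)
    then have "L v i = 2" by (simp add: L_def)
    then have "L v \<noteq> 0" by auto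
    then have mem: "euclid_wt n (L v) \<in> {euclid_wt n c | c. c \<in> C \<and> c \<noteq> 0}" using LC[OF v(1)] by blast
    have fin: "finite {euclid_wt n c | c. c \<in> C \<and> c \<noteq> 0}"
      by (rule finite_subset[of _ "{..6*n}"]) (auto simp: euclid_wt_le)
    have "min_euclid_wt n C \<le> euclid_wt n (L v)"
      unfolding min_euclid_wt_def using fin mem by (rule Min_le)
    then show ?thesis using mn16 wtL[of v] by simp
  qed
  have Tadd: "v + w \<in> T" if "v \<in> T" "w \<in> T" for v w
    using that by (auto simp: T_def perp_def W_def bi_add2)
  have T0: "0 \<in> T" by (auto simp: T_def perp_def W_def bi_def)
  define ones :: "nat \<Rightarrow> bit" where "ones = (\<lambda>i. if i < n then 1 else 0)"
  define Os where "Os = {0, ones}"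
  have ones0: "ones \<noteq> 0" using npos by (auto simp: ones_def fun_eq_iff)
  have OW: "Os \<subseteq> W n" by (auto simp: Os_def W_def ones_def)
  have O0: "0 \<in> Os" by (simp add: Os_def)
  have Oadd: "x + y \<in> Os" if "x \<in> Os" "y \<in> Os" for x y
    using that by (auto simp: Os_def)
  have cO: "card Os = 2" using ones0 by (simp add: Os_def)
  define E where "E = perp n Os"
  have cE: "2 * card E = 2 ^ n" using perp_card[OF OW O0 Oadd] cO by (simp add: E_def)
  have EW: "E \<subseteq> W n" by (auto simp: E_def perp_def)
  have bi_ones: "bi n ones y = (\<Sum>i<n. y i)" for y
    unfolding bi_def ones_def by (rule sum.cong) auto
  have TE: "T \<subseteq> E"
  proof
    fix v assume v: "v \<in> T"
    obtain m where m: "wt n v = 2 * m" using Teven[OF v] by blast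
    have "bi n ones v = 0" using m by (simp add: bi_ones sum_wt)
    then show "v \<in> E" using v TW by (auto simp: E_def perp_def Os_def)
  qed
  define g where "g = (\<lambda>(v, i). v + ee i)"
  have gimg: "g ` (T \<times> {..<n}) \<subseteq> W n - E"
  proof
    fix z assume "z \<in> g ` (T \<times> {..<n})"
    then obtain v i where vi: "v \<in> T" "i < n" "z = v + ee i" by (auto simp: g_def)
    have vW: "v \<in> W n" using vi TW by blast
    have "z \<in> W n" using vW vi by (auto simp: W_def ee_def)
    moreover have "bi n ones z = 1"
    proof -
      have "bi n ones v = 0" using vi(1) TE by (auto simp: E_def perp_def Os_def)
      moreover have "bi n ones (ee i) = 1" using vi(2) by (simp add: bi_ee ones_def)
      ultimately show ?thesis using vi(3) by (simp add: bi_add2)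
    qed
    then have "z \<notin> E" by (auto simp: E_def perp_def Os_def)
    ultimately show "z \<in> W n - E" by blast
  qed
  have ginj: "inj_on g (T \<times> {..<n})"
  proof (rule inj_onI, clarify)
    fix v i w j assume v: "v \<in> T" "i < n" and w: "w \<in> T" "j < n" and eq: "g (v, i) = g (w, j)"
    have eq1: "v + ee i = w + ee j" using eq by (simp add: g_def)
    have vw: "v + w = ee i + ee j"
    proof -
      have "v + w = (v + ee i) + (w + ee i)" by (simp add: ac_simps)
      also have "\<dots> = (w + ee j) + (w + ee i)" using eq1 by simp
      also have "\<dots> = (w + w) + (ee i + ee j)" by (simp only: ac_simps)
      also have "\<dots> = ee i + ee j" by (simp only: fun_add_self add_0_left)
      finally show ?thesis .
    qed
    have "v = w"
    proof (rule ccontr)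
      assume "v \<noteq> w"
      then have "v + w \<noteq> 0"
        by (metis add.right_neutral add.assoc fun_add_self)
      then have "4 \<le> wt n (v + w)" using Tmin Tadd v w by blast
      moreover have "wt n (ee i + ee j) \<le> 2"
      proof -
        have "{l. l < n \<and> (ee i + ee j) l = 1} \<subseteq> {i, j}" by (auto simp: ee_def)
        then have "card {l. l < n \<and> (ee i + ee j) l = 1} \<le> card {i, j}" by (rule card_mono[rotated]) simp
        also have "\<dots> \<le> 2" by (simp add: card_insert_if)
        finally show ?thesis by (simp add: wt_def)
      qed
      ultimately show False using vw by simp
    qed
    moreover then have "ee i = ee j" using eq1 by simp
    then have "ee i i = ee j i" by simp
    then have "i = j" by (auto simp: ee_def split: if_splits)
    ultimately show "v = w \<and> i = j" by blast
  qed
  have "card T * n = card (g ` (T \<times> {..<n}))" using ginj by (simp add: card_image card_cartesian_product)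
  also have "\<dots> \<le> card (W n - E)" using gimg finW by (intro card_mono) auto
  also have "\<dots> = 2 ^ n - card E" using EW finW cW by (simp add: card_Diff_subset finite_subset)
  finally have sp: "2 * (card T * n) \<le> 2 ^ n" using cE by linarith
  have t_ge: "2 ^ k \<le> card T" using cB card_mono[OF fT BT] by simp
  have kT: "2 ^ k * card T = 2 ^ n" using cBT cB by simp
  have "2 ^ (2 * k) \<le> (2::nat) ^ n"
  proof -
    have "2 ^ (2 * k) = (2::nat) ^ k * 2 ^ k" by (simp add: power_add mult_2)
    also have "\<dots> \<le> 2 ^ k * card T" using t_ge by simp
    finally show ?thesis using kT by simp
  qed
  then have up: "2 * k \<le> n" by (rule power_le_imp_le_exp[rotated]) simp
  have "2 ^ n * (2 * n) \<le> 2 ^ n * 2 ^ k"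
  proof -
    have "2 ^ n * (2 * n) = 2 ^ k * (2 * (card T * n))" using kT by (simp add: ac_simps)
    also have "\<dots> \<le> 2 ^ k * 2 ^ n" using sp by simp
    finally show ?thesis by (simp add: ac_simps)
  qed
  then have lo: "2 * n \<le> 2 ^ k" by simp
  show ?thesis using up lo by (simp add: k_def B_def)
qed

theorem mainTheorem2:
  fixes n :: nat and C :: "(nat \<Rightarrow> 4) set"
  assumes "extremal_type_II n C"
  shows "(n = 32 \<longrightarrow> 6 \<le> bin_dim (residue_code C) \<and> bin_dim (residue_code C) \<le> 16) \<and>
         (n = 40 \<longrightarrow> 7 \<le> bin_dim (residue_code C) \<and> bin_dim (residue_code C) \<le> 20)"
proof (intro conjI impI)
  let ?k = "bin_dim (residue_code C)"
  have sm: "?k \<le> m \<Longrightarrow> (2::nat) ^ ?k \<le> 2 ^ m" for m by (rule power_increasing) simp_all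
  {
    assume n: "n = 32"
    then have h: "2 * ?k \<le> 32 \<and> (64::nat) \<le> 2 ^ ?k" using main_aux[OF assms] by auto
    then show "?k \<le> 16" by simp
    show "6 \<le> ?k"
    proof (rule ccontr)
      assume "\<not> 6 \<le> ?k"
      then have "?k \<le> 5" by simp
      then have "(2::nat) ^ ?k \<le> 2 ^ 5" by (rule sm)
      then show False using h by simp
    qed
  }
  {
    assume n: "n = 40"
    then have h: "2 * ?k \<le> 40 \<and> (80::nat) \<le> 2 ^ ?k" using main_aux[OF assms] by auto
    then show "?k \<le> 20" by simp
    show "7 \<le> ?k"
    proof (rule ccontr)
      assume "\<not> 7 \<le> ?k"
      then have "?k \<le> 6" by simp
      then have "(2::nat) ^ ?k \<le> 2 ^ 6" by (rule sm)
      then show False using h by simp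
    qed
  }
qed



end
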